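(* Fix integers $T\ge 2$ and $1\le T_n\le T$, a number $\bar\epsilon_n>0$, and rates $0<q_n\le q$. Define $\epsilon_n^1,\dots,\epsilon_n^T$ recursively by $$\epsilon_n^t=\begin{cases}\dfrac{\bar\epsilon_n-\sum_{\tau=1}^{t-1}\epsilon_n^\tau}{T-t+1}\left(\dfrac{q_n}{q}\right)^2, & t<T_n,\\[2ex] \dfrac{\bar\epsilon_n-\sum_{\tau=1}^{t-1}\epsilon_n^\tau}{T-t+1}, & t\ge T_n.\end{cases}$$ Then $\epsilon_n^t\ge \epsilon_n^{t-1}$ for all $2\le t\le T_n$, and $\epsilon_n^t=\epsilon_n^{t-1}$ for all $T_n<t\le T$. In particular, the per-round privacy spent $\epsilon_n^t$ is non-decreasing in $t$ and constant from round $T_n$ on.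
   Context: In the paper's time-adaptive differentially private federated learning scheme, $\bar\epsilon_n$ is the total Rényi-DP privacy budget of client $n$, $T$ the number of rounds, $T_n$ the round at which client $n$ switches from a saving mode (sampling rate $q_n$) to a spending mode (sampling rate $q$), and $\epsilon_n^t$ the Rényi-DP privacy spent by client $n$ in round $t$. *)

theory Defs
  imports Complex_Main
begin

definition dp_factor :: "nat \<Rightarrow> real \<Rightarrow> real \<Rightarrow> nat \<Rightarrow> real" where
  "dp_factor Tn qn q t = (if t < Tn then (qn / q)^2 else 1)"

fun dp_spent :: "nat \<Rightarrow> nat \<Rightarrow> real \<Rightarrow> real \<Rightarrow> real \<Rightarrow> nat \<Rightarrow> real" where
  "dp_spent T Tn ebar qn q 0 = 0"
| "dp_spent T Tn ebar qn q (Suc k) =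
     dp_spent T Tn ebar qn q k
     + dp_factor Tn qn q (Suc k) * (ebar - dp_spent T Tn ebar qn q k) / (real T - real (Suc k) + 1)"

definition dp_eps :: "nat \<Rightarrow> nat \<Rightarrow> real \<Rightarrow> real \<Rightarrow> real \<Rightarrow> nat \<Rightarrow> real" where
  "dp_eps T Tn ebar qn q t =
     dp_factor Tn qn q t * (ebar - dp_spent T Tn ebar qn q (t - 1)) / (real T - real t + 1)"

lemma dp_spent_eq_sum:
  "dp_spent T Tn ebar qn q k = (\<Sum>\<tau>=1..k. dp_eps T Tn ebar qn q \<tau>)"
  by (induction k) (simp_all add: dp_eps_def)

end

theory Submission
  imports Defs
begin

lemma fac_bounds:
  assumes "0 < qn" "qn \<le> q"
  shows "0 \<le> dp_factor Tn qn q t \<and> dp_factor Tn qn q t \<le> 1"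
proof -
  have "0 \<le> qn / q" "qn / q \<le> 1" using assms by auto
  then have "(qn/q)^2 \<le> 1" by (simp add: power_le_one)
  then show ?thesis by (simp add: dp_factor_def)
qed

lemma rem_nonneg:
  assumes "0 < qn" "qn \<le> q" "ebar > 0"
  shows "k \<le> T \<Longrightarrow> 0 \<le> ebar - dp_spent T Tn ebar qn q k"
proof (induction k)
  case 0 then show ?case using assms by simp
next
  case (Suc k)
  define R where "R = ebar - dp_spent T Tn ebar qn q k"
  define f where "f = dp_factor Tn qn q (Suc k)"
  define N where "N = real T - real (Suc k) + 1"
  have R: "R \<ge> 0" using Suc R_def by simp
  have N: "N \<ge> 1" using Suc.prems N_def by simp
  have f: "0 \<le> f" "f \<le> 1" using fac_bounds[OF assms(1,2)] f_def by auto
  have "ebar - dp_spent T Tn ebar qn q (Suc k) = R * (1 - f / N)"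
    by (simp add: R_def f_def N_def algebra_simps)
  moreover have "f / N \<le> 1" using f N by (simp add: divide_le_eq)
  ultimately show ?case using R by simp
qed

lemma step:
  assumes "0 < qn" "qn \<le> q" "ebar > 0" "Suc (Suc k) \<le> T"
  shows "dp_eps T Tn ebar qn q (Suc (Suc k)) =
     dp_factor Tn qn q (Suc (Suc k)) * (ebar - dp_spent T Tn ebar qn q k)
       * (real T - real k - dp_factor Tn qn q (Suc k)) / ((real T - real k) * (real T - real k - 1))"
   and "dp_eps T Tn ebar qn q (Suc k) =
     dp_factor Tn qn q (Suc k) * (ebar - dp_spent T Tn ebar qn q k) / (real T - real k)"
proof -
  have N: "real T - real k \<ge> 2" using assms(4) by simp
  show "dp_eps T Tn ebar qn q (Suc k) =
     dp_factor Tn qn q (Suc k) * (ebar - dp_spent T Tn ebar qn q k) / (real T - real k)"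
    by (simp add: dp_eps_def)
  show "dp_eps T Tn ebar qn q (Suc (Suc k)) =
     dp_factor Tn qn q (Suc (Suc k)) * (ebar - dp_spent T Tn ebar qn q k)
       * (real T - real k - dp_factor Tn qn q (Suc k)) / ((real T - real k) * (real T - real k - 1))"
    using N by (simp add: dp_eps_def field_simps)
qed

theorem mainTheorem2:
  fixes T Tn :: nat and ebar qn q :: real
  assumes "T \<ge> 2" and "1 \<le> Tn" and "Tn \<le> T"
    and "ebar > 0" and "0 < qn" and "qn \<le> q"
  shows "(\<forall>t. 2 \<le> t \<and> t \<le> Tn \<longrightarrow> dp_eps T Tn ebar qn q t \<ge> dp_eps T Tn ebar qn q (t - 1))
       \<and> (\<forall>t. Tn < t \<and> t \<le> T \<longrightarrow> dp_eps T Tn ebar qn q t = dp_eps T Tn ebar qn q (t - 1))"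
proof -
  have key: "\<And>k. Suc (Suc k) \<le> T \<Longrightarrow>
     (Suc (Suc k) \<le> Tn \<longrightarrow> dp_eps T Tn ebar qn q (Suc (Suc k)) \<ge> dp_eps T Tn ebar qn q (Suc k))
     \<and> (Tn < Suc (Suc k) \<longrightarrow> dp_eps T Tn ebar qn q (Suc (Suc k)) = dp_eps T Tn ebar qn q (Suc k))"
  proof -
    fix k assume kT: "Suc (Suc k) \<le> T"
    define R where "R = ebar - dp_spent T Tn ebar qn q k"
    define N where "N = real T - real k"
    define a where "a = (qn/q)^2"
    have R: "R \<ge> 0" using rem_nonneg[OF assms(5,6,4), of k T Tn] kT R_def by simp
    have N: "N \<ge> 2" using kT N_def by simp
    have a: "0 \<le> a" "a \<le> 1" using fac_bounds[OF assms(5,6), of Tn 0] Suc_le_lessD assms(2)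
      by (auto simp: dp_factor_def a_def)
    have e2: "dp_eps T Tn ebar qn q (Suc (Suc k)) =
        dp_factor Tn qn q (Suc (Suc k)) * R * (N - dp_factor Tn qn q (Suc k)) / (N * (N - 1))"
      using step(1)[OF assms(5,6,4) kT] R_def N_def by simp
    have e1: "dp_eps T Tn ebar qn q (Suc k) = dp_factor Tn qn q (Suc k) * R / N"
      using step(2)[OF assms(5,6,4) kT] R_def N_def by simp
    have pos: "N * (N - 1) > 0" using N by simp
    show "?thesis k"
    proof (intro conjI impI)
      assume h: "Suc (Suc k) \<le> Tn"
      show "dp_eps T Tn ebar qn q (Suc (Suc k)) \<ge> dp_eps T Tn ebar qn q (Suc k)"
      proof (cases "Suc (Suc k) < Tn")
        case True
        then have "dp_factor Tn qn q (Suc (Suc k)) = a" "dp_factor Tn qn q (Suc k) = a"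
          by (auto simp: dp_factor_def a_def)
        moreover have "a * R / N \<le> a * R * (N - a) / (N * (N - 1))"
        proof -
          have "a * R * (N - 1) \<le> a * R * (N - a)"
            using a R by (intro mult_left_mono) auto
          have "a * R / N = a * R * (N - 1) / (N * (N - 1))" using pos N by (simp add: field_simps)
          also have "\<dots> \<le> a * R * (N - a) / (N * (N - 1))"
            using \<open>a * R * (N - 1) \<le> a * R * (N - a)\<close> pos by (intro divide_right_mono) auto
          finally show ?thesis .
        qed
        ultimately show ?thesis using e1 e2 by simp
      next
        case False
        then have "dp_factor Tn qn q (Suc (Suc k)) = 1" "dp_factor Tn qn q (Suc k) = a"
          using h by (auto simp: dp_factor_def a_def)
        moreover have "a * R / N \<le> 1 * R * (N - a) / (N * (N - 1))"
        proof -
          have "a * (N - 1) \<le> N - a" using a N by (simp add: algebra_simps mult_left_le)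
          then have "a * R * (N - 1) \<le> R * (N - a)"
            using R mult_left_mono[of "a * (N - 1)" "N - a" R] by (simp add: algebra_simps)
          have "a * R / N = a * R * (N - 1) / (N * (N - 1))" using pos N by (simp add: field_simps)
          also have "\<dots> \<le> 1 * R * (N - a) / (N * (N - 1))"
            using \<open>a * R * (N - 1) \<le> R * (N - a)\<close> pos by (intro divide_right_mono) auto
          finally show ?thesis .
        qed
        ultimately show ?thesis using e1 e2 by simp
      qed
    next
      assume h: "Tn < Suc (Suc k)"
      then have "dp_factor Tn qn q (Suc (Suc k)) = 1" "dp_factor Tn qn q (Suc k) = 1"
        by (auto simp: dp_factor_def)
      show "dp_eps T Tn ebar qn q (Suc (Suc k)) = dp_eps T Tn ebar qn q (Suc k)"
      proof -
        have "1 * R * (N - 1) / (N * (N - 1)) = 1 * R / N" using N by (simp add: field_simps)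
        then show ?thesis unfolding e1 e2 \<open>dp_factor Tn qn q (Suc (Suc k)) = 1\<close>
          \<open>dp_factor Tn qn q (Suc k) = 1\<close> .
      qed
    qed
  qed
  show ?thesis
  proof (intro conjI allI impI)
    fix t assume h: "2 \<le> t \<and> t \<le> Tn"
    define k where "k = t - 2"
    have t: "t = Suc (Suc k)" using h k_def by linarith
    show "dp_eps T Tn ebar qn q t \<ge> dp_eps T Tn ebar qn q (t - 1)"
      using key[of k] h t assms(3) by simp
  next
    fix t assume h: "Tn < t \<and> t \<le> T"
    define k where "k = t - 2"
    have t: "t = Suc (Suc k)" using h k_def assms(2) by linarith
    show "dp_eps T Tn ebar qn q t = dp_eps T Tn ebar qn q (t - 1)"
      using key[of k] h t by simp
  qed
qed

end
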